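(* Let $R$ be a commutative ring, $M$ an $R$-module having at least one prime submodule, $X=\mathrm{Spec}(M)$, $N$ an $R$-module, $K\le M$, and $U=X\setminus V(K)$. Then $\Gamma_{(K:M)}(\mathcal{A}(N,M)(U))=0$.
   Context: For a submodule $L$ of an $R$-module $M$, $(L:M)=\{r\in R\mid rM\subseteq L\}$. A submodule $P$ of $M$ is prime if $P\neq M$ and whenever $rm\in P$ ($r\in R$, $m\in M$) then $r\in (P:M)$ or $m\in P$. $\mathrm{Spec}(M)$ is the set of prime submodules. For $L\le M$, $V(L)=\{P\in X\mid (P:M)\supseteq (L:M)\}$; these are the closed sets of the Zariski topology on $X$. For open $U\subseteq X$, $\mathrm{Supp}(U)=\{(P:M)\mid P\in U\}$. $\mathcal{A}(N,M)(U)$ is the $R$-module (componentwise operations) of families $(\gamma_{\mathfrak p})_{\mathfrak p\in\mathrm{Supp}(U)}\in\prod_{\mathfrak p\in\mathrm{Supp}(U)}N_{\mathfrak p}$ such that for each $Q\in U$ there exist an open neighbourhood $W\subseteq U$ of $Q$ and $s\in R$, $m\in N$ with $s\notin (P:M)$ and $\gamma_{(P:M)}=m/s\in N_{(P:M)}$ for every $P\in W$. For an ideal $I$ and module $H$, $\Gamma_I(H)=\bigcup_{n\ge1}(0:_H I^n)$. *)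

theory Defs
  imports Complex_Main
begin

text \<open>Modules over a commutative ring R (the type 'r) are rendered as types with a
scalar action satisfying the HOL locale module. sM is the action on M, sN on N.\<close>

definition mcolon :: "('r::comm_ring_1 \<Rightarrow> 'm::ab_group_add \<Rightarrow> 'm) \<Rightarrow> 'm set \<Rightarrow> 'r set" where
  "mcolon sM L = {r. \<forall>m. sM r m \<in> L}"

definition is_prime_sub :: "('r::comm_ring_1 \<Rightarrow> 'm::ab_group_add \<Rightarrow> 'm) \<Rightarrow> 'm set \<Rightarrow> bool" where
  "is_prime_sub sM P \<longleftrightarrow> module.subspace sM P \<and> P \<noteq> UNIV \<and>
     (\<forall>r m. sM r m \<in> P \<longrightarrow> r \<in> mcolon sM P \<or> m \<in> P)"

definition mSpec :: "('r::comm_ring_1 \<Rightarrow> 'm::ab_group_add \<Rightarrow> 'm) \<Rightarrow> 'm set set" where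
  "mSpec sM = {P. is_prime_sub sM P}"

definition VZ :: "('r::comm_ring_1 \<Rightarrow> 'm::ab_group_add \<Rightarrow> 'm) \<Rightarrow> 'm set \<Rightarrow> 'm set set" where
  "VZ sM L = {P \<in> mSpec sM. mcolon sM L \<subseteq> mcolon sM P}"

definition zopen :: "('r::comm_ring_1 \<Rightarrow> 'm::ab_group_add \<Rightarrow> 'm) \<Rightarrow> 'm set set \<Rightarrow> bool" where
  "zopen sM U \<longleftrightarrow> (\<exists>L. module.subspace sM L \<and> U = mSpec sM - VZ sM L)"

definition mSupp :: "('r::comm_ring_1 \<Rightarrow> 'm::ab_group_add \<Rightarrow> 'm) \<Rightarrow> 'm set set \<Rightarrow> 'r set set" where
  "mSupp sM U = (\<lambda>P. mcolon sM P) ` U"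

text \<open>Localization N_p: the fraction n/s is the equivalence class of (n,s).\<close>
definition loc_class :: "('r::comm_ring_1 \<Rightarrow> 'n::ab_group_add \<Rightarrow> 'n) \<Rightarrow> 'r set \<Rightarrow> 'n \<Rightarrow> 'r \<Rightarrow> ('n \<times> 'r) set" where
  "loc_class sN p n s = {(n', s'). s' \<notin> p \<and> (\<exists>t. t \<notin> p \<and> sN t (sN s' n - sN s n') = 0)}"

definition localization :: "('r::comm_ring_1 \<Rightarrow> 'n::ab_group_add \<Rightarrow> 'n) \<Rightarrow> 'r set \<Rightarrow> ('n \<times> 'r) set set" where
  "localization sN p = {loc_class sN p n s | n s. s \<notin> p}"

definition loc_scale :: "('r::comm_ring_1 \<Rightarrow> 'n::ab_group_add \<Rightarrow> 'n) \<Rightarrow> 'r set \<Rightarrow> 'r \<Rightarrow> ('n \<times> 'r) set \<Rightarrow> ('n \<times> 'r) set" where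
  "loc_scale sN p r c = \<Union>{loc_class sN p (sN r n) s | n s. (n, s) \<in> c}"

text \<open>Elements of A(N,M)(U): families indexed by Supp(U) (extended by {} outside).\<close>
definition sections :: "('r::comm_ring_1 \<Rightarrow> 'm::ab_group_add \<Rightarrow> 'm) \<Rightarrow> ('r \<Rightarrow> 'n::ab_group_add \<Rightarrow> 'n)
    \<Rightarrow> 'm set set \<Rightarrow> ('r set \<Rightarrow> ('n \<times> 'r) set) set" where
  "sections sM sN U = {\<gamma>. (\<forall>p. p \<notin> mSupp sM U \<longrightarrow> \<gamma> p = {}) \<and>
      (\<forall>p \<in> mSupp sM U. \<gamma> p \<in> localization sN p) \<and>
      (\<forall>Q \<in> U. \<exists>W. zopen sM W \<and> W \<subseteq> U \<and> Q \<in> W \<and>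
         (\<exists>s m. \<forall>P \<in> W. s \<notin> mcolon sM P \<and> \<gamma> (mcolon sM P) = loc_class sN (mcolon sM P) m s))}"

definition sec_scale :: "('r::comm_ring_1 \<Rightarrow> 'm::ab_group_add \<Rightarrow> 'm) \<Rightarrow> ('r \<Rightarrow> 'n::ab_group_add \<Rightarrow> 'n)
    \<Rightarrow> 'm set set \<Rightarrow> 'r \<Rightarrow> ('r set \<Rightarrow> ('n \<times> 'r) set) \<Rightarrow> ('r set \<Rightarrow> ('n \<times> 'r) set)" where
  "sec_scale sM sN U r \<gamma> = (\<lambda>p. if p \<in> mSupp sM U then loc_scale sN p r (\<gamma> p) else {})"

definition sec_zero :: "('r::comm_ring_1 \<Rightarrow> 'm::ab_group_add \<Rightarrow> 'm) \<Rightarrow> ('r \<Rightarrow> 'n::ab_group_add \<Rightarrow> 'n)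
    \<Rightarrow> 'm set set \<Rightarrow> ('r set \<Rightarrow> ('n \<times> 'r) set)" where
  "sec_zero sM sN U = (\<lambda>p. if p \<in> mSupp sM U then loc_class sN p 0 1 else {})"

definition ideal_pow :: "'r::comm_ring_1 set \<Rightarrow> nat \<Rightarrow> 'r set" where
  "ideal_pow I n = module.span ((*) :: 'r \<Rightarrow> 'r \<Rightarrow> 'r)
     {(\<Prod>i<n. f i) | f. \<forall>i<n. f i \<in> I}"

definition Gamma_tors :: "('r::comm_ring_1 \<Rightarrow> 'm::ab_group_add \<Rightarrow> 'm) \<Rightarrow> ('r \<Rightarrow> 'n::ab_group_add \<Rightarrow> 'n)
    \<Rightarrow> 'm set set \<Rightarrow> 'r set \<Rightarrow> ('r set \<Rightarrow> ('n \<times> 'r) set) set" where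
  "Gamma_tors sM sN U I = {\<gamma> \<in> sections sM sN U. \<exists>n\<ge>1. \<forall>r \<in> ideal_pow I n.
      sec_scale sM sN U r \<gamma> = sec_zero sM sN U}"

end

theory Submission
  imports Defs
begin

lemma mult_module: "module ((*) :: 'r::comm_ring_1 \<Rightarrow> 'r \<Rightarrow> 'r)"
  by unfold_locales (simp_all add: distrib_left distrib_right mult.assoc)

lemma pow_in_ideal_pow:
  assumes "r \<in> I" shows "r ^ n \<in> ideal_pow I n"
proof -
  have "r ^ n \<in> {(\<Prod>i<n. f i) | f. \<forall>i<n. f i \<in> I}"
    using assms by (intro CollectI exI[of _ "\<lambda>_. r"]) simp
  then show ?thesis unfolding ideal_pow_def by (rule module.span_base[OF mult_module])
qed

lemma prime_colon:
  assumes "module sM" "P \<in> mSpec sM"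
  shows "1 \<notin> mcolon sM P"
    and "a \<notin> mcolon sM P \<Longrightarrow> b \<notin> mcolon sM P \<Longrightarrow> a * b \<notin> mcolon sM P"
proof -
  have pr: "is_prime_sub sM P" using assms(2) by (simp add: mSpec_def)
  show "1 \<notin> mcolon sM P"
    using pr assms(1) by (auto simp: is_prime_sub_def mcolon_def module.scale_one)
  assume a: "a \<notin> mcolon sM P" and b: "b \<notin> mcolon sM P"
  show "a * b \<notin> mcolon sM P"
  proof
    assume ab: "a * b \<in> mcolon sM P"
    have "\<forall>m. sM b m \<in> P"
    proof
      fix m
      have "sM a (sM b m) \<in> P" using ab assms(1)
        by (simp add: mcolon_def module.scale_scale)
      then show "sM b m \<in> P" using pr a by (auto simp: is_prime_sub_def)
    qed
    then show False using b by (simp add: mcolon_def)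
  qed
qed

lemma prime_colon_pow:
  assumes "module sM" "P \<in> mSpec sM" "r \<notin> mcolon sM P"
  shows "r ^ n \<notin> mcolon sM P"
proof (induction n)
  case 0 then show ?case using prime_colon(1)[OF assms(1,2)] by simp
next
  case (Suc n) then show ?case using prime_colon(2)[OF assms(1,2) assms(3) Suc.IH] by simp
qed

lemma loc_zero_key:
  assumes mN: "module sN"
    and s0: "s0 \<notin> p" and u: "u \<notin> p" and un: "sN u n0 = 0"
    and mc: "\<And>a b. a \<notin> p \<Longrightarrow> b \<notin> p \<Longrightarrow> a * b \<notin> p"
  shows "loc_class sN p n0 s0 = loc_class sN p 0 1"
proof -
  interpret N: module sN by (rule mN)
  have sc: "sN x (sN y v) = sN (x * y) v" for x y v by (rule N.scale_scale)
  show ?thesis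
  proof (rule set_eqI, clarify)
  fix a b
  show "((a, b) \<in> loc_class sN p n0 s0) = ((a, b) \<in> loc_class sN p 0 1)"
  proof
    assume "(a, b) \<in> loc_class sN p n0 s0"
    hence "b \<notin> p \<and> (\<exists>t. t \<notin> p \<and> sN t (sN b n0 - sN s0 a) = 0)"
      unfolding loc_class_def by simp
    then obtain t where b: "b \<notin> p" and t: "t \<notin> p" and e: "sN t (sN b n0 - sN s0 a) = 0"
      by blast
    have "sN t (sN b n0) = sN t (sN s0 a)"
      using e by (simp add: N.scale_right_diff_distrib)
    hence "sN u (sN t (sN b n0)) = sN u (sN t (sN s0 a))" by simp
    moreover have "sN u (sN t (sN b n0)) = sN (t*b) (sN u n0)"
      by (simp only: sc mult.commute mult.left_commute)
    moreover have "sN u (sN t (sN s0 a)) = sN (u*t*s0) a"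
      by (simp only: sc mult.commute mult.left_commute)
    ultimately have z: "sN (u*t*s0) a = 0" using un by simp
    have ne: "u*t*s0 \<notin> p" using mc u t s0 by blast
    have "sN (u*t*s0) (sN b 0 - sN 1 a) = 0" using z by simp
    then show "(a, b) \<in> loc_class sN p 0 1"
      using b ne unfolding loc_class_def by blast
  next
    assume "(a, b) \<in> loc_class sN p 0 1"
    hence "b \<notin> p \<and> (\<exists>t. t \<notin> p \<and> sN t (sN b 0 - sN 1 a) = 0)"
      unfolding loc_class_def by simp
    then obtain t where b: "b \<notin> p" and t: "t \<notin> p" and e: "sN t (sN b 0 - sN 1 a) = 0"
      by blast
    have ta: "sN t a = 0" using e by simp
    have "sN (t*u) (sN b n0 - sN s0 a) = sN (t*b) (sN u n0) - sN (u*s0) (sN t a)"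
      by (simp only: N.scale_right_diff_distrib sc mult.commute mult.left_commute)
    also have "\<dots> = 0" using un ta by simp
    finally have "sN (t*u) (sN b n0 - sN s0 a) = 0" .
    moreover have "t*u \<notin> p" using mc t u by blast
    ultimately show "(a, b) \<in> loc_class sN p n0 s0"
      using b unfolding loc_class_def by blast
  qed
  qed
qed

lemma loc_scale_zero:
  assumes mN: "module sN" and one: "1 \<notin> p"
    and mc: "\<And>a b. a \<notin> p \<Longrightarrow> b \<notin> p \<Longrightarrow> a * b \<notin> p"
  shows "loc_scale sN p r (loc_class sN p 0 1) = loc_class sN p 0 1"
proof -
  have A: "loc_class sN p (sN r n) s = loc_class sN p 0 1" if "(n, s) \<in> loc_class sN p 0 1" for n s
  proof -
    have "s \<notin> p \<and> (\<exists>t. t \<notin> p \<and> sN t (sN s 0 - sN 1 n) = 0)"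
      using that unfolding loc_class_def by simp
    then obtain t where s: "s \<notin> p" and t: "t \<notin> p" and e: "sN t (sN s 0 - sN 1 n) = 0"
      by blast
    have "sN t n = 0" using e mN
      by (simp add: module.scale_zero_right module.scale_one module.scale_minus_right)
    hence "sN t (sN r n) = 0" using mN
      by (metis module.scale_scale module.scale_zero_right mult.commute)
    then show ?thesis using loc_zero_key[OF mN s t _ mc] by blast
  qed
  have B: "(0, 1) \<in> loc_class sN p 0 1" using one mN
    by (auto simp: loc_class_def module.scale_zero_right intro!: exI[of _ 1])
  have "{loc_class sN p (sN r n) s | n s. (n, s) \<in> loc_class sN p 0 1} = {loc_class sN p 0 1}"
  proof (rule set_eqI, rule iffI)
    fix x assume "x \<in> {loc_class sN p (sN r n) s | n s. (n, s) \<in> loc_class sN p 0 1}"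
    then obtain n s where "x = loc_class sN p (sN r n) s" "(n, s) \<in> loc_class sN p 0 1"
      by (simp only: mem_Collect_eq) blast
    then show "x \<in> {loc_class sN p 0 1}" using A by simp
  next
    fix x assume "x \<in> {loc_class sN p 0 1}"
    then have "x = loc_class sN p (sN r 0) 1" using A[OF B] by simp
    then show "x \<in> {loc_class sN p (sN r n) s | n s. (n, s) \<in> loc_class sN p 0 1}"
      using B by blast
  qed
  then show ?thesis unfolding loc_scale_def by simp
qed

theorem lemma3p6:
  fixes sM :: "'r::comm_ring_1 \<Rightarrow> 'm::ab_group_add \<Rightarrow> 'm"
    and sN :: "'r \<Rightarrow> 'n::ab_group_add \<Rightarrow> 'n"
    and K :: "'m set"
  assumes "module sM" and "module sN"
    and "mSpec sM \<noteq> {}"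
    and "module.subspace sM K"
  shows "Gamma_tors sM sN (mSpec sM - VZ sM K) (mcolon sM K) = {sec_zero sM sN (mSpec sM - VZ sM K)}"
proof -
  define U where "U = mSpec sM - VZ sM K"
  have zU: "zopen sM U" using assms(4) unfolding U_def zopen_def by blast
  have one: "1 \<notin> mcolon sM P" if "P \<in> U" for P
    using prime_colon(1)[OF assms(1)] that by (auto simp: U_def)
  have zsec: "sec_zero sM sN U \<in> sections sM sN U"
    unfolding sections_def
  proof (intro CollectI conjI ballI allI impI)
    show "sec_zero sM sN U p = {}" if "p \<notin> mSupp sM U" for p
      using that by (simp add: sec_zero_def)
    show "sec_zero sM sN U p \<in> localization sN p" if "p \<in> mSupp sM U" for p
      using that one by (auto simp: sec_zero_def localization_def mSupp_def)
    show "\<exists>W. zopen sM W \<and> W \<subseteq> U \<and> Q \<in> W \<and>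
         (\<exists>s m. \<forall>P \<in> W. s \<notin> mcolon sM P \<and> sec_zero sM sN U (mcolon sM P) = loc_class sN (mcolon sM P) m s)"
      if "Q \<in> U" for Q
      using that zU one by (intro exI[of _ U] conjI exI[of _ 1] exI[of _ 0]) (auto simp: sec_zero_def mSupp_def)
  qed
  have sc0: "sec_scale sM sN U r (sec_zero sM sN U) = sec_zero sM sN U" for r
  proof
    fix p show "sec_scale sM sN U r (sec_zero sM sN U) p = sec_zero sM sN U p"
    proof (cases "p \<in> mSupp sM U")
      case True
      then obtain P where P: "P \<in> U" and pP: "p = mcolon sM P" by (auto simp: mSupp_def)
      have PS: "P \<in> mSpec sM" using P by (simp add: U_def)
      have "loc_scale sN p r (loc_class sN p 0 1) = loc_class sN p 0 1"
        using loc_scale_zero[OF assms(2)] prime_colon[OF assms(1) PS] pP by blast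
      then show ?thesis using True by (simp add: sec_scale_def sec_zero_def)
    qed (simp add: sec_scale_def sec_zero_def)
  qed
  have zG: "sec_zero sM sN U \<in> Gamma_tors sM sN U (mcolon sM K)"
    using zsec sc0 unfolding Gamma_tors_def by (intro CollectI conjI exI[of _ 1]) auto
  have eq: "\<gamma> = sec_zero sM sN U" if g: "\<gamma> \<in> Gamma_tors sM sN U (mcolon sM K)" for \<gamma>
  proof
    fix p
    obtain n where n: "n \<ge> 1" and ann: "\<forall>r \<in> ideal_pow (mcolon sM K) n.
      sec_scale sM sN U r \<gamma> = sec_zero sM sN U" and gs: "\<gamma> \<in> sections sM sN U"
      using g unfolding Gamma_tors_def by blast
    show "\<gamma> p = sec_zero sM sN U p"
    proof (cases "p \<in> mSupp sM U")
      case False then show ?thesis using gs by (simp add: sections_def sec_zero_def)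
    next
      case True
      then obtain P where P: "P \<in> U" and pP: "p = mcolon sM P" by (auto simp: mSupp_def)
      have PS: "P \<in> mSpec sM" using P by (simp add: U_def)
      obtain r where rK: "r \<in> mcolon sM K" and rP: "r \<notin> mcolon sM P"
        using P by (auto simp: U_def VZ_def)
      have rn: "r ^ n \<notin> p" using prime_colon_pow[OF assms(1) PS rP] pP by simp
      have "\<gamma> p \<in> localization sN p" using gs True by (simp add: sections_def)
      then obtain n0 s0 where gp: "\<gamma> p = loc_class sN p n0 s0" and s0: "s0 \<notin> p"
        by (auto simp: localization_def)
      have "sec_scale sM sN U (r^n) \<gamma> p = sec_zero sM sN U p"
        using ann pow_in_ideal_pow[OF rK] by simp
      hence ls: "loc_scale sN p (r^n) (\<gamma> p) = loc_class sN p 0 1"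
        using True by (simp add: sec_scale_def sec_zero_def)
      have p1: "1 \<notin> p" using one[OF P] pP by simp
      have "(n0, s0) \<in> \<gamma> p" using gp s0 p1 assms(2)
        by (auto simp: loc_class_def module.scale_zero_right intro!: exI[of _ 1])
      hence "loc_class sN p (sN (r^n) n0) s0 \<in> {loc_class sN p (sN (r^n) x) y | x y. (x, y) \<in> \<gamma> p}"
        by blast
      hence "loc_class sN p (sN (r^n) n0) s0 \<subseteq> loc_scale sN p (r^n) (\<gamma> p)"
        unfolding loc_scale_def by (rule Union_upper)
      hence "loc_class sN p (sN (r^n) n0) s0 \<subseteq> loc_class sN p 0 1"
        using ls by simp
      moreover have "(sN (r^n) n0, s0) \<in> loc_class sN p (sN (r^n) n0) s0"
        using s0 p1 assms(2) by (auto simp: loc_class_def module.scale_zero_right intro!: exI[of _ 1])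
      ultimately have "(sN (r^n) n0, s0) \<in> loc_class sN p 0 1" by blast
      hence "s0 \<notin> p \<and> (\<exists>t. t \<notin> p \<and> sN t (sN s0 0 - sN 1 (sN (r^n) n0)) = 0)"
        unfolding loc_class_def by simp
      then obtain t where t: "t \<notin> p" and e: "sN t (sN s0 0 - sN 1 (sN (r^n) n0)) = 0"
        by blast
      have "sN (t * r^n) n0 = 0"
        using e assms(2) by (simp add: module.scale_zero_right module.scale_one
            module.scale_minus_right module.scale_scale)
      moreover have mc: "\<And>a b. a \<notin> p \<Longrightarrow> b \<notin> p \<Longrightarrow> a * b \<notin> p"
        using prime_colon(2)[OF assms(1) PS] pP by blast
      moreover have "t * r^n \<notin> p" using mc t rn by blast
      ultimately have "\<gamma> p = loc_class sN p 0 1"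
        using loc_zero_key[OF assms(2) s0 _ _ mc, of "t * r^n"] gp by simp
      then show ?thesis using True by (simp add: sec_zero_def)
    qed
  qed
  have "Gamma_tors sM sN U (mcolon sM K) = {sec_zero sM sN U}" using zG eq by blast
  then show ?thesis by (simp only: U_def)
qed

end
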